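(* Let $E$ be a non-trivial locally convex space such that $(E,\sigma(E,E'))$ is a $\sigma$-space. Then: (i) $(E,\sigma(E,E'))$ admits a weaker separable metrizable locally convex topology; (ii) $(E,\sigma(E,E'))$ has countable pseudocharacter and $|E|=\mathfrak c$; (iii) $(E',\sigma(E',E))$ is separable.
   Context: A $\sigma$-space is a regular space having a $\sigma$-locally finite network, where a network is a family $\mathcal N$ of sets such that every open $U$ and $x\in U$ admit $N\in\mathcal N$ with $x\in N\subset U$. Countable pseudocharacter means every point is the intersection of countably many of its open neighbourhoods. *)

theory Defs
  imports "HOL-Analysis.Analysis" "HOL-Library.Equipollence"
begin

definition locally_convex_topology :: "('a::real_vector) topology \<Rightarrow> bool" where
  "locally_convex_topology T \<longleftrightarrow>
     topspace T = UNIV \<and>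
     continuous_map (prod_topology T T) T (\<lambda>(x, y). x + y) \<and>
     continuous_map (prod_topology euclideanreal T) T (\<lambda>(c, x). c *\<^sub>R x) \<and>
     Hausdorff_space T \<and>
     (\<forall>U x. openin T U \<and> x \<in> U \<longrightarrow> (\<exists>V. openin T V \<and> convex V \<and> x \<in> V \<and> V \<subseteq> U))"

definition dual_space :: "('a::real_vector) topology \<Rightarrow> ('a \<Rightarrow> real) set" where
  "dual_space T = {f. linear f \<and> continuous_map T euclideanreal f}"

definition weak_topology :: "('a::real_vector) topology \<Rightarrow> 'a topology" where
  "weak_topology T = topology_generated_by {f -` U | f U. f \<in> dual_space T \<and> open U}"

definition weak_star_topology :: "('a::real_vector) topology \<Rightarrow> ('a \<Rightarrow> real) topology" where
  "weak_star_topology T = subtopology (powertop_real UNIV) (dual_space T)"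

definition network_in :: "'a topology \<Rightarrow> 'a set set \<Rightarrow> bool" where
  "network_in X \<N> \<longleftrightarrow>
     (\<forall>U x. openin X U \<and> x \<in> U \<longrightarrow> (\<exists>N\<in>\<N>. x \<in> N \<and> N \<subseteq> U))"

definition sigma_locally_finite_in :: "'a topology \<Rightarrow> 'a set set \<Rightarrow> bool" where
  "sigma_locally_finite_in X \<N> \<longleftrightarrow>
     (\<exists>\<F> :: nat \<Rightarrow> 'a set set. \<N> = (\<Union>n. \<F> n) \<and> (\<forall>n. locally_finite_in X (\<F> n)))"

definition sigma_space :: "'a topology \<Rightarrow> bool" where
  "sigma_space X \<longleftrightarrow> regular_space X \<and>
     (\<exists>\<N>. network_in X \<N> \<and> sigma_locally_finite_in X \<N>)"

definition countable_pseudocharacter :: "'a topology \<Rightarrow> bool" where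
  "countable_pseudocharacter X \<longleftrightarrow>
     (\<forall>x\<in>topspace X. \<exists>\<U>. countable \<U> \<and> (\<forall>U\<in>\<U>. openin X U \<and> x \<in> U) \<and> \<Inter>\<U> = {x})"

end

theory Submission
  imports Defs
begin


definition HBgood :: "('a::real_vector \<Rightarrow> real) \<Rightarrow> 'a \<Rightarrow> ('a \<times> real) set \<Rightarrow> bool" where
  "HBgood p x0 G \<longleftrightarrow> (\<forall>a r s. (a,r)\<in>G \<longrightarrow> (a,s)\<in>G \<longrightarrow> r = s) \<and>
     (\<forall>a r b s. (a,r)\<in>G \<longrightarrow> (b,s)\<in>G \<longrightarrow> (a+b,r+s)\<in>G) \<and>
     (\<forall>c a r. (a,r)\<in>G \<longrightarrow> (c *\<^sub>R a, c*r)\<in>G) \<and>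
     (\<forall>a r. (a,r)\<in>G \<longrightarrow> r \<le> p a) \<and> (x0, p x0) \<in> G"

lemma HB_step:
  fixes p :: "'a::real_vector \<Rightarrow> real"
  assumes sub: "\<And>x y. p (x+y) \<le> p x + p y" and hom: "\<And>c x. c \<ge> 0 \<Longrightarrow> p (c *\<^sub>R x) = c * p x"
    and G: "HBgood p x0 G" and y: "y \<notin> Domain G"
  shows "\<exists>G'. HBgood p x0 G' \<and> G \<subset> G'"
proof -
  have fnc: "\<And>a r s. (a,r)\<in>G \<Longrightarrow> (a,s)\<in>G \<Longrightarrow> r = s"
    and add: "\<And>a r b s. (a,r)\<in>G \<Longrightarrow> (b,s)\<in>G \<Longrightarrow> (a+b,r+s)\<in>G"
    and scl: "\<And>c a r. (a,r)\<in>G \<Longrightarrow> (c *\<^sub>R a, c*r)\<in>G"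
    and bd: "\<And>a r. (a,r)\<in>G \<Longrightarrow> r \<le> p a" and x0: "(x0, p x0) \<in> G"
    using G unfolding HBgood_def by blast+
  have z: "(0,0) \<in> G" using scl[OF x0, of 0] by simp
  define S where "S = {s - p (a - y) | a s. (a,s) \<in> G}"
  have key: "s - p (a - y) \<le> p (b + y) - t" if "(a,s)\<in>G" "(b,t)\<in>G" for a s b t
  proof -
    have "s + t \<le> p (a + b)" using bd[OF add[OF that]] .
    also have "\<dots> = p ((a - y) + (b + y))" by (simp add: algebra_simps)
    also have "\<dots> \<le> p (a - y) + p (b + y)" by (rule sub)
    finally show ?thesis by simp
  qed
  have Sne: "S \<noteq> {}" using z unfolding S_def by blast
  have Sbd: "\<And>x. x \<in> S \<Longrightarrow> x \<le> p (0 + y) - 0" unfolding S_def using key[OF _ z] by blast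
  define r where "r = Sup S"
  have i: "s - p (a - y) \<le> r" if "(a,s)\<in>G" for a s
    unfolding r_def by (rule cSup_upper) (use that Sbd in \<open>auto simp: S_def bdd_above_def\<close>)
  have ii: "r \<le> p (b + y) - t" if "(b,t)\<in>G" for b t
    unfolding r_def by (rule cSup_least[OF Sne]) (use that key in \<open>auto simp: S_def\<close>)
  have bound: "s + c*r \<le> p (a + c *\<^sub>R y)" if as: "(a,s)\<in>G" for a s c
  proof (cases c "0::real" rule: linorder_cases)
    case less
    define d where "d = -c"
    have d: "d > 0" using less d_def by simp
    have "(inverse d *\<^sub>R a, inverse d * s) \<in> G" using scl[OF as] .
    from i[OF this] have "inverse d * s - p (inverse d *\<^sub>R a - y) \<le> r" .
    hence "d * (inverse d * s - p (inverse d *\<^sub>R a - y)) \<le> d * r" using d by simp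
    moreover have "d * p (inverse d *\<^sub>R a - y) = p (a - d *\<^sub>R y)"
    proof -
      have "d * p (inverse d *\<^sub>R a - y) = p (d *\<^sub>R (inverse d *\<^sub>R a - y))" using hom[of d] d by simp
      also have "d *\<^sub>R (inverse d *\<^sub>R a - y) = a - d *\<^sub>R y" using d by (simp add: algebra_simps)
      finally show ?thesis .
    qed
    moreover have "d * (inverse d * s) = s" using d by simp
    moreover have "d * (inverse d * s - p (inverse d *\<^sub>R a - y)) = d * (inverse d * s) - d * p (inverse d *\<^sub>R a - y)"
      by (rule right_diff_distrib)
    ultimately have "s - p (a - d *\<^sub>R y) \<le> d * r" by linarith
    thus ?thesis unfolding d_def by (simp add: algebra_simps)
  next
    case equal thus ?thesis using bd[OF as] by simp
  next
    case greater
    have "(inverse c *\<^sub>R a, inverse c * s) \<in> G" using scl[OF as] .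
    from ii[OF this] have "r \<le> p (inverse c *\<^sub>R a + y) - inverse c * s" .
    hence "c * r \<le> c * (p (inverse c *\<^sub>R a + y) - inverse c * s)" using greater by simp
    moreover have "c * p (inverse c *\<^sub>R a + y) = p (a + c *\<^sub>R y)"
    proof -
      have "c * p (inverse c *\<^sub>R a + y) = p (c *\<^sub>R (inverse c *\<^sub>R a + y))" using hom[of c] greater by simp
      also have "c *\<^sub>R (inverse c *\<^sub>R a + y) = a + c *\<^sub>R y" using greater by (simp add: algebra_simps)
      finally show ?thesis .
    qed
    moreover have "c * inverse c * s = s" using greater by simp
    moreover have "c * (p (inverse c *\<^sub>R a + y) - inverse c * s) = c * p (inverse c *\<^sub>R a + y) - c * inverse c * s"
      by (simp add: right_diff_distrib)
    ultimately show ?thesis by linarith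
  qed
  define G' where "G' = {(a + c *\<^sub>R y, s + c*r) | a s c. (a,s) \<in> G}"
  have sub1: "G \<subseteq> G'" unfolding G'_def by force
  have new: "(y, r) \<in> G'" unfolding G'_def using z by force
  have "(y,r) \<notin> G" using y by blast
  have fnc': "u = v" if h: "(x,u)\<in>G'" "(x,v)\<in>G'" for x u v
  proof -
    obtain a s c where 1: "(a,s)\<in>G" "x = a + c *\<^sub>R y" "u = s + c*r" using h(1) unfolding G'_def by blast
    obtain a' s' c' where 2: "(a',s')\<in>G" "x = a' + c' *\<^sub>R y" "v = s' + c'*r" using h(2) unfolding G'_def by blast
    show ?thesis
    proof (cases "c = c'")
      case True
      then have "a = a'" using 1 2 by simp
      then show ?thesis using fnc 1 2 True by blast
    next
      case False
      have "(a + (-1) *\<^sub>R a', s + (-1) * s') \<in> G" using add[OF 1(1) scl[OF 2(1)]] .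
      hence "(inverse (c' - c) *\<^sub>R (a + (-1) *\<^sub>R a'), inverse (c' - c) * (s + (-1) * s')) \<in> G"
        by (rule scl)
      moreover have "inverse (c' - c) *\<^sub>R (a + (-1) *\<^sub>R a') = y"
      proof -
        have "a + (-1) *\<^sub>R a' = (c' - c) *\<^sub>R y" using 1 2 by (simp add: algebra_simps)
        thus ?thesis using False by simp
      qed
      ultimately have "y \<in> Domain G" by (metis Domain.intros)
      thus ?thesis using y by blast
    qed
  qed
  have "HBgood p x0 G'"
    unfolding HBgood_def
  proof (intro conjI allI impI)
    show "r1 = s1" if "(a, r1) \<in> G'" "(a, s1) \<in> G'" for a r1 s1 using fnc' that by blast
    show "(a + b, r1 + s1) \<in> G'" if h: "(a, r1) \<in> G'" "(b, s1) \<in> G'" for a r1 b s1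
    proof -
      obtain a1 t1 c1 where 1: "(a1,t1)\<in>G" "a = a1 + c1 *\<^sub>R y" "r1 = t1 + c1*r" using h(1) unfolding G'_def by blast
      obtain a2 t2 c2 where 2: "(a2,t2)\<in>G" "b = a2 + c2 *\<^sub>R y" "s1 = t2 + c2*r" using h(2) unfolding G'_def by blast
      have "(a1+a2, t1+t2)\<in>G" using add 1 2 by blast
      moreover have "a + b = (a1+a2) + (c1+c2) *\<^sub>R y" "r1 + s1 = (t1+t2) + (c1+c2)*r"
        using 1 2 by (auto simp: algebra_simps)
      ultimately show ?thesis unfolding G'_def by blast
    qed
    show "(c *\<^sub>R a, c * r1) \<in> G'" if h: "(a, r1) \<in> G'" for c a r1
    proof -
      obtain a1 t1 c1 where 1: "(a1,t1)\<in>G" "a = a1 + c1 *\<^sub>R y" "r1 = t1 + c1*r" using h(1) unfolding G'_def by blast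
      have "(c *\<^sub>R a1, c*t1)\<in>G" using scl 1 by blast
      moreover have "c *\<^sub>R a = c *\<^sub>R a1 + (c*c1) *\<^sub>R y" "c * r1 = c*t1 + (c*c1)*r"
        using 1 by (auto simp: algebra_simps)
      ultimately show ?thesis unfolding G'_def by blast
    qed
    show "r1 \<le> p a" if "(a, r1) \<in> G'" for a r1
      using that bound unfolding G'_def by blast
    show "(x0, p x0) \<in> G'" using sub1 x0 by blast
  qed
  thus ?thesis using sub1 new \<open>(y,r) \<notin> G\<close> by blast
qed

lemma HB:
  fixes p :: "'a::real_vector \<Rightarrow> real"
  assumes sub: "\<And>x y. p (x+y) \<le> p x + p y" and hom: "\<And>c x. c \<ge> 0 \<Longrightarrow> p (c *\<^sub>R x) = c * p x"
  shows "\<exists>f. linear f \<and> (\<forall>x. f x \<le> p x) \<and> f x0 = p x0"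
proof -
  define A where "A = {G. HBgood p x0 G}"
  define G0 where "G0 = {(c *\<^sub>R x0, c * p x0) | c. True}"
  have p0: "p 0 = 0" using hom[of 0 0] by simp
  have G0: "HBgood p x0 G0"
    unfolding HBgood_def G0_def
  proof (intro conjI allI impI)
    fix a r s assume "(a, r) \<in> {(c *\<^sub>R x0, c * p x0) |c. True}" "(a, s) \<in> {(c *\<^sub>R x0, c * p x0) |c. True}"
    then obtain c d where "a = c *\<^sub>R x0" "r = c * p x0" "a = d *\<^sub>R x0" "s = d * p x0" by blast
    then show "r = s" by (cases "x0 = 0") (auto simp: p0)
  next
    fix a r b s assume "(a, r) \<in> {(c *\<^sub>R x0, c * p x0) |c. True}" "(b, s) \<in> {(c *\<^sub>R x0, c * p x0) |c. True}"
    then obtain c d where "a = c *\<^sub>R x0" "r = c * p x0" "b = d *\<^sub>R x0" "s = d * p x0" by blast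
    then show "(a + b, r + s) \<in> {(c *\<^sub>R x0, c * p x0) |c. True}"
      by (intro CollectI exI[of _ "c+d"]) (auto simp: algebra_simps)
  next
    fix e a r assume "(a, r) \<in> {(c *\<^sub>R x0, c * p x0) |c. True}"
    then obtain c where "a = c *\<^sub>R x0" "r = c * p x0" by blast
    then show "(e *\<^sub>R a, e * r) \<in> {(c *\<^sub>R x0, c * p x0) |c. True}"
      by (intro CollectI exI[of _ "e*c"]) auto
  next
    fix a r assume "(a, r) \<in> {(c *\<^sub>R x0, c * p x0) |c. True}"
    then obtain c where c: "a = c *\<^sub>R x0" "r = c * p x0" by blast
    show "r \<le> p a"
    proof (cases "c \<ge> 0")
      case True thus ?thesis using c hom by simp
    next
      case False
      have s0: "0 \<le> p x0 + p (-x0)" using sub[of x0 "-x0"] p0 by simp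
      have "p a = (-c) * p (-x0)" using c hom[of "-c" "-x0"] False by simp
      moreover have "c * (p x0 + p (-x0)) \<le> 0" using False s0 by (simp add: mult_nonpos_nonneg)
      ultimately show ?thesis using c by (simp add: algebra_simps)
    qed
  next
    show "(x0, p x0) \<in> {(c *\<^sub>R x0, c * p x0) |c. True}" by (intro CollectI exI[of _ 1]) auto
  qed
  have "\<forall>C\<in>chains A. \<exists>U\<in>A. \<forall>X\<in>C. X \<subseteq> U"
  proof
    fix C assume C: "C \<in> chains A"
    show "\<exists>U\<in>A. \<forall>X\<in>C. X \<subseteq> U"
    proof (cases "C = {}")
      case True thus ?thesis using G0 A_def by auto
    next
      case False
      have CA: "C \<subseteq> A" and ch: "\<And>X Y. X\<in>C \<Longrightarrow> Y\<in>C \<Longrightarrow> X \<subseteq> Y \<or> Y \<subseteq> X"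
        using C unfolding chains_def chain_subset_def by auto
      have gd: "\<And>X. X \<in> C \<Longrightarrow> HBgood p x0 X" using CA A_def by auto
      have "HBgood p x0 (\<Union>C)"
        unfolding HBgood_def
      proof (intro conjI allI impI)
        fix a r s assume "(a, r) \<in> \<Union>C" "(a, s) \<in> \<Union>C"
        then obtain X Y where "X\<in>C" "Y\<in>C" "(a,r)\<in>X" "(a,s)\<in>Y" by blast
        then show "r = s" using ch gd unfolding HBgood_def by (metis subsetD)
      next
        fix a r b s assume "(a, r) \<in> \<Union>C" "(b, s) \<in> \<Union>C"
        then obtain X Y where XY: "X\<in>C" "Y\<in>C" "(a,r)\<in>X" "(b,s)\<in>Y" by blast
        show "(a + b, r + s) \<in> \<Union>C"
        proof (cases "X \<subseteq> Y")
          case True thus ?thesis using XY gd[of Y] unfolding HBgood_def by blast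
        next
          case False hence "Y \<subseteq> X" using ch XY by blast
          thus ?thesis using XY gd[of X] unfolding HBgood_def by blast
        qed
      next
        fix c a r assume "(a, r) \<in> \<Union>C"
        then show "(c *\<^sub>R a, c * r) \<in> \<Union>C" using gd unfolding HBgood_def by blast
      next
        fix a r assume "(a, r) \<in> \<Union>C"
        then show "r \<le> p a" using gd unfolding HBgood_def by blast
      next
        show "(x0, p x0) \<in> \<Union>C" using False gd unfolding HBgood_def by blast
      qed
      thus ?thesis using A_def by auto
    qed
  qed
  from Zorn_Lemma2[OF this] obtain M where M: "M \<in> A" and max: "\<And>X. X \<in> A \<Longrightarrow> M \<subseteq> X \<Longrightarrow> X = M"
    by blast
  have gM: "HBgood p x0 M" using M A_def by auto
  have dom: "y \<in> Domain M" for y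
  proof (rule ccontr)
    assume "y \<notin> Domain M"
    from HB_step[OF sub hom gM this] obtain G' where "HBgood p x0 G'" "M \<subset> G'" by blast
    thus False using max[of G'] A_def by auto
  qed
  have fnc: "\<And>a r s. (a,r)\<in>M \<Longrightarrow> (a,s)\<in>M \<Longrightarrow> r = s"
    and add: "\<And>a r b s. (a,r)\<in>M \<Longrightarrow> (b,s)\<in>M \<Longrightarrow> (a+b,r+s)\<in>M"
    and scl: "\<And>c a r. (a,r)\<in>M \<Longrightarrow> (c *\<^sub>R a, c*r)\<in>M"
    and bd: "\<And>a r. (a,r)\<in>M \<Longrightarrow> r \<le> p a" and x0: "(x0, p x0) \<in> M"
    using gM unfolding HBgood_def by blast+
  define f where "f y = (THE r. (y,r) \<in> M)" for y
  have fM: "(y, f y) \<in> M" for y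
  proof -
    obtain r where r: "(y,r) \<in> M" using dom[of y] by blast
    have "f y = r" unfolding f_def using r fnc by blast
    thus ?thesis using r by simp
  qed
  have fv: "(y, r) \<in> M \<Longrightarrow> f y = r" for y r using fM fnc by blast
  have "linear f"
  proof (rule linearI)
    show "f (b1 + b2) = f b1 + f b2" for b1 b2 using fv[OF add[OF fM fM]] .
    show "f (c *\<^sub>R b) = c *\<^sub>R f b" for c b using fv[OF scl[OF fM]] by simp
  qed
  moreover have "\<forall>x. f x \<le> p x" using bd fM by blast
  moreover have "f x0 = p x0" using fv[OF x0] .
  ultimately show ?thesis by blast
qed



lemma lc_topspace: "locally_convex_topology T \<Longrightarrow> topspace T = UNIV"
  by (simp add: locally_convex_topology_def)

lemma lc_affine_cont:
  assumes lc: "locally_convex_topology T"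
  shows "continuous_map T T (\<lambda>z. c *\<^sub>R (z - a))"
proof -
  have tsp: "topspace T = UNIV" using lc by (simp add: locally_convex_topology_def)
  have add: "continuous_map (prod_topology T T) T (\<lambda>(x, y). x + y)"
   and sc: "continuous_map (prod_topology euclideanreal T) T (\<lambda>(c, x). c *\<^sub>R x)"
    using lc by (auto simp: locally_convex_topology_def)
  have "continuous_map T (prod_topology T T) (\<lambda>z. (z, -a))"
    by (intro continuous_map_pairedI) (auto simp: tsp)
  hence "continuous_map T T ((\<lambda>(x, y). x + y) \<circ> (\<lambda>z. (z, -a)))"
    by (rule continuous_map_compose[OF _ add])
  hence t: "continuous_map T T (\<lambda>z. z - a)" by (simp add: o_def)
  have "continuous_map T (prod_topology euclideanreal T) (\<lambda>z. (c, z - a))"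
    by (intro continuous_map_pairedI t) auto
  hence "continuous_map T T ((\<lambda>(c, x). c *\<^sub>R x) \<circ> (\<lambda>z. (c, z - a)))"
    by (rule continuous_map_compose[OF _ sc])
  thus ?thesis by (simp add: o_def)
qed

lemma lc_open_affine:
  assumes lc: "locally_convex_topology T" and W: "openin T W"
  shows "openin T {z. c *\<^sub>R (z - a) \<in> W}"
  using openin_continuous_map_preimage[OF lc_affine_cont[OF lc] W] lc_topspace[OF lc] by simp

lemma lc_absorbing:
  assumes lc: "locally_convex_topology T" and W: "openin T W" and "0 \<in> W"
  shows "\<exists>t>0. t *\<^sub>R y \<in> W"
proof -
  have tsp: "topspace T = UNIV" using lc by (simp add: locally_convex_topology_def)
  have sc: "continuous_map (prod_topology euclideanreal T) T (\<lambda>(c, x). c *\<^sub>R x)"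
    using lc by (auto simp: locally_convex_topology_def)
  have "continuous_map euclideanreal (prod_topology euclideanreal T) (\<lambda>c. (c, y))"
    by (intro continuous_map_pairedI) (auto simp: tsp)
  hence "continuous_map euclideanreal T ((\<lambda>(c, x). c *\<^sub>R x) \<circ> (\<lambda>c. (c, y)))"
    by (rule continuous_map_compose[OF _ sc])
  hence "continuous_map euclideanreal T (\<lambda>c. c *\<^sub>R y)" by (simp add: o_def)
  from openin_continuous_map_preimage[OF this W]
  have "open {c. c *\<^sub>R y \<in> W}" by simp
  moreover have "0 \<in> {c. c *\<^sub>R y \<in> W}" using assms by simp
  ultimately obtain e where e: "e > 0" "ball 0 e \<subseteq> {c. c *\<^sub>R y \<in> W}"
    by (meson open_contains_ball)
  have eb: "e/2 \<in> ball 0 e" using e by simp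
  have "(e/2) *\<^sub>R y \<in> W" "e/2 > 0" using subsetD[OF e(2) eb] e by auto
  thus ?thesis by blast
qed

definition mink :: "'a::real_vector set \<Rightarrow> 'a \<Rightarrow> real" where
  "mink W y = Inf {t. 0 < t \<and> inverse t *\<^sub>R y \<in> W}"

lemma sep:
  assumes lc: "locally_convex_topology T" and x: "x \<noteq> 0"
  shows "\<exists>f\<in>dual_space T. f x \<noteq> 0"
proof -
  have tsp: "topspace T = UNIV" using lc by (simp add: locally_convex_topology_def)
  have "Hausdorff_space T" using lc by (simp add: locally_convex_topology_def)
  then obtain U V where UV: "openin T U" "openin T V" "0 \<in> U" "x \<in> V" "disjnt U V"
    using x unfolding Hausdorff_space_def tsp by (metis UNIV_I)
  obtain V0 where V0: "openin T V0" "convex V0" "0 \<in> V0" "V0 \<subseteq> U"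
    using lc UV unfolding locally_convex_topology_def by meson
  define W where "W = V0 \<inter> {z. (-1) *\<^sub>R (z - 0) \<in> V0}"
  have Wo: "openin T W" unfolding W_def by (intro openin_Int V0 lc_open_affine[OF lc])
  have W0: "0 \<in> W" using V0 unfolding W_def by simp
  have xW: "x \<notin> W" using UV V0 unfolding W_def disjnt_def by auto
  have Wsym: "-z \<in> W \<longleftrightarrow> z \<in> W" for z unfolding W_def by auto
  have Wc: "convex W"
  proof (rule convexI)
    fix u v a b assume h: "u \<in> W" "v \<in> W" "0 \<le> (a::real)" "0 \<le> b" "a + b = 1"
    have "a *\<^sub>R u + b *\<^sub>R v \<in> V0" using h V0(2) unfolding W_def by (auto intro: convexD)
    moreover have "a *\<^sub>R (-u) + b *\<^sub>R (-v) \<in> V0" using h convexD[OF V0(2), of "-u" "-v" a b] unfolding W_def by auto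
    ultimately show "a *\<^sub>R u + b *\<^sub>R v \<in> W" unfolding W_def by (simp add: algebra_simps)
  qed
  define A where "A y = {t. 0 < t \<and> inverse t *\<^sub>R y \<in> W}" for y
  define p where "p = mink W"
  have pA: "p y = Inf (A y)" for y unfolding p_def mink_def A_def ..
  have Ane: "A y \<noteq> {}" for y
  proof -
    obtain t where "t > 0" "t *\<^sub>R y \<in> W" using lc_absorbing[OF lc Wo W0] by blast
    hence "inverse t \<in> A y" unfolding A_def by simp
    thus ?thesis by blast
  qed
  have Abd: "bdd_below (A y)" for y unfolding A_def bdd_below_def by (rule exI[of _ 0]) auto
  have p_lower: "p y \<le> t" if "t \<in> A y" for y t using cInf_lower[OF that Abd] pA by simp
  have p_greatest: "c \<le> p y" if "\<And>t. t \<in> A y \<Longrightarrow> c \<le> t" for c y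
    using cInf_greatest[OF Ane that] pA by simp
  have p_nonneg: "0 \<le> p y" for y by (rule p_greatest) (auto simp: A_def)
  have Aup: "t' \<in> A y" if "t \<in> A y" "t \<le> t'" for t t' y
  proof -
    have t: "t > 0" "inverse t *\<^sub>R y \<in> W" using that unfolding A_def by auto
    have "(t/t') *\<^sub>R (inverse t *\<^sub>R y) + (1 - t/t') *\<^sub>R 0 \<in> W"
      using t that by (intro convexD[OF Wc _ W0]) auto
    moreover have "(t/t') *\<^sub>R (inverse t *\<^sub>R y) + (1 - t/t') *\<^sub>R 0 = inverse t' *\<^sub>R y"
      using t by (simp add: field_simps)
    ultimately show ?thesis using t that unfolding A_def by auto
  qed
  have Aadd: "s + t \<in> A (y + z)" if "s \<in> A y" "t \<in> A z" for s t y z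
  proof -
    have st: "s > 0" "inverse s *\<^sub>R y \<in> W" "t > 0" "inverse t *\<^sub>R z \<in> W"
      using that unfolding A_def by auto
    have "(s/(s+t)) *\<^sub>R (inverse s *\<^sub>R y) + (t/(s+t)) *\<^sub>R (inverse t *\<^sub>R z) \<in> W"
    proof (rule convexD[OF Wc])
      show "s/(s+t) + t/(s+t) = 1" using st by (simp add: add_divide_distrib[symmetric])
    qed (use st in auto)
    moreover have "(s/(s+t)) *\<^sub>R (inverse s *\<^sub>R y) + (t/(s+t)) *\<^sub>R (inverse t *\<^sub>R z) = inverse (s+t) *\<^sub>R (y+z)"
    proof -
      have 1: "(s/(s+t)) * inverse s = inverse (s+t)" "(t/(s+t)) * inverse t = inverse (s+t)"
        using st by (auto simp: field_simps)
      show ?thesis by (simp only: scaleR_scaleR 1 scaleR_add_right)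
    qed
    ultimately show ?thesis using st unfolding A_def by auto
  qed
  have sub: "p (y + z) \<le> p y + p z" for y z
  proof -
    have "p (y+z) - t \<le> p y" if t: "t \<in> A z" for t
      using p_lower[OF Aadd[OF _ t]] by (intro p_greatest) (simp add: algebra_simps)
    hence "p (y+z) - p y \<le> p z" by (intro p_greatest) (simp add: algebra_simps)
    thus ?thesis by simp
  qed
  have Ascale: "c * t \<in> A (c *\<^sub>R y) \<longleftrightarrow> t \<in> A y" if "c > 0" for c t y
  proof -
    have eq: "inverse (c*t) *\<^sub>R (c *\<^sub>R y) = inverse t *\<^sub>R y" using that by simp
    have pos: "(0 < c*t) = (0 < t)" using that by (simp add: zero_less_mult_iff)
    show ?thesis unfolding A_def mem_Collect_eq by (simp only: eq pos)
  qed
  have hom: "p (c *\<^sub>R y) = c * p y" if "c \<ge> 0" for c y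
  proof (cases "c = 0")
    case True
    have "p 0 \<le> 0"
    proof (rule ccontr)
      assume "\<not> p 0 \<le> 0"
      hence "p 0/2 \<in> A 0" unfolding A_def using W0 by simp
      from p_lower[OF this] show False using \<open>\<not> p 0 \<le> 0\<close> by simp
    qed
    thus ?thesis using True p_nonneg[of 0] by simp
  next
    case False
    hence c: "c > 0" using that by simp
    have "p (c *\<^sub>R y) \<le> c * p y"
    proof -
      have "p (c *\<^sub>R y) / c \<le> t" if "t \<in> A y" for t
        using p_lower[of "c*t" "c *\<^sub>R y"] Ascale[OF c] that c by (simp add: field_simps)
      hence "p (c *\<^sub>R y) / c \<le> p y" by (rule p_greatest)
      thus ?thesis using c by (simp add: field_simps)
    qed
    moreover have "c * p y \<le> p (c *\<^sub>R y)"
    proof -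
      have "c * p y \<le> t" if t: "t \<in> A (c *\<^sub>R y)" for t
      proof -
        have "c * (t/c) \<in> A (c *\<^sub>R y)" using t c by simp
        hence "t/c \<in> A y" using Ascale[OF c] by blast
        from p_lower[OF this] show ?thesis using c by (simp add: field_simps)
      qed
      thus ?thesis by (rule p_greatest)
    qed
    ultimately show ?thesis by simp
  qed
  have psym: "p (-y) = p y" for y
  proof -
    have "A (-y) = A y" unfolding A_def using Wsym by (metis scaleR_minus_right)
    thus ?thesis using pA by simp
  qed
  obtain f where f: "linear f" "\<And>y. f y \<le> p y" "f x = p x" using HB[OF sub hom, of x] by blast
  have px: "p x \<ge> 1"
  proof (rule ccontr)
    assume "\<not> 1 \<le> p x"
    hence "Inf (A x) < 1" using pA by simp
    then obtain t where "t \<in> A x" "t < 1" using cInf_less_iff[OF Ane Abd] by blast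
    hence "1 \<in> A x" using Aup by fastforce
    hence "x \<in> W" unfolding A_def by simp
    thus False using xW by simp
  qed
  have fabs: "\<bar>f y\<bar> \<le> p y" for y
  proof -
    have "f (-y) = - f y" using f(1) by (simp add: linear_neg)
    thus ?thesis using f(2)[of y] f(2)[of "-y"] psym[of y] by linarith
  qed
  have "continuous_map T euclideanreal f"
    unfolding continuous_map_def
  proof (intro conjI allI impI)
    show "f \<in> topspace T \<rightarrow> topspace euclideanreal" by simp
    fix U :: "real set" assume "openin euclideanreal U"
    hence oU: "open U" by simp
    show "openin T {x \<in> topspace T. f x \<in> U}"
    proof (subst openin_subopen, intro ballI)
      fix y0 assume "y0 \<in> {x \<in> topspace T. f x \<in> U}"
      hence "f y0 \<in> U" by simp
      then obtain e where e: "e > 0" "ball (f y0) e \<subseteq> U" using oU open_contains_ball by blast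
      define N where "N = {z. (2/e) *\<^sub>R (z - y0) \<in> W}"
      have "openin T N" unfolding N_def by (rule lc_open_affine[OF lc Wo])
      moreover have "y0 \<in> N" using W0 unfolding N_def by simp
      moreover have "N \<subseteq> {x \<in> topspace T. f x \<in> U}"
      proof
        fix z assume "z \<in> N"
        hence "e/2 \<in> A (z - y0)" unfolding N_def A_def using e by simp
        hence "p (z - y0) \<le> e/2" by (rule p_lower)
        moreover have "f (z - y0) = f z - f y0" using f(1) by (simp add: linear_diff)
        ultimately have "\<bar>f z - f y0\<bar> < e" using fabs[of "z - y0"] e by linarith
        hence "f z \<in> ball (f y0) e" by (simp add: dist_real_def abs_minus_commute)
        thus "z \<in> {x \<in> topspace T. f x \<in> U}" using e tsp by auto
      qed
      ultimately show "\<exists>T'. openin T T' \<and> y0 \<in> T' \<and> T' \<subseteq> {x \<in> topspace T. f x \<in> U}" by blast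
    qed
  qed
  hence "f \<in> dual_space T" using f(1) unfolding dual_space_def by simp
  moreover have "f x \<noteq> 0" using f(3) px by simp
  ultimately show ?thesis by blast
qed



lemma zero_dual: "(\<lambda>_. 0) \<in> dual_space T"
  unfolding dual_space_def by (auto intro: linearI)

lemma weak_topspace: "topspace (weak_topology T) = UNIV"
proof -
  have "UNIV \<in> {f -` U | f U. f \<in> dual_space T \<and> open U}"
    using zero_dual[of T] by (intro CollectI exI[of _ "\<lambda>_. 0"] exI[of _ UNIV]) auto
  thus ?thesis unfolding weak_topology_def by auto
qed

lemma weak_basis: "f \<in> dual_space T \<Longrightarrow> open U \<Longrightarrow> openin (weak_topology T) (f -` U)"
  unfolding weak_topology_def by (rule topology_generated_by_Basis) blast

lemma dual_cont_weak: "f \<in> dual_space T \<Longrightarrow> continuous_map (weak_topology T) euclideanreal f"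
  unfolding continuous_map_def weak_topspace using weak_basis by (auto simp: vimage_def)

lemma dual_linear: "f \<in> dual_space T \<Longrightarrow> linear f"
  unfolding dual_space_def by simp

lemma open_box_gen:
  assumes "finite I" "\<And>i. i \<in> I \<Longrightarrow> continuous_map X euclideanreal (h i)"
  shows "openin X {y\<in>topspace X. \<forall>i\<in>I. \<bar>h i y - c i\<bar> < e}"
  using assms
proof (induction I rule: finite_induct)
  case empty thus ?case by simp
next
  case (insert i I)
  have "openin X {y\<in>topspace X. h i y \<in> ball (c i) e}"
    using insert by (intro openin_continuous_map_preimage) auto
  moreover have "openin X {y\<in>topspace X. \<forall>i\<in>I. \<bar>h i y - c i\<bar> < e}" using insert by auto
  ultimately have "openin X ({y\<in>topspace X. h i y \<in> ball (c i) e} \<inter> {y\<in>topspace X. \<forall>i\<in>I. \<bar>h i y - c i\<bar> < e})"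
    by (rule openin_Int)
  moreover have "{y\<in>topspace X. h i y \<in> ball (c i) e} \<inter> {y\<in>topspace X. \<forall>i\<in>I. \<bar>h i y - c i\<bar> < e}
      = {y\<in>topspace X. \<forall>i\<in>insert i I. \<bar>h i y - c i\<bar> < e}"
    by (auto simp: dist_real_def abs_minus_commute)
  ultimately show ?case by simp
qed

lemma weak_box_open:
  assumes "finite F" "F \<subseteq> dual_space T"
  shows "openin (weak_topology T) {y. \<forall>f\<in>F. \<bar>f y - f x\<bar> < e}"
  using open_box_gen[of F "weak_topology T" "\<lambda>f. f" "\<lambda>f. f x" e] assms dual_cont_weak
  by (auto simp: weak_topspace)

lemma weak_nbhd:
  assumes "openin (weak_topology T) U" "x \<in> U"
  shows "\<exists>F e. finite F \<and> F \<subseteq> dual_space T \<and> e > 0 \<and> {y. \<forall>f\<in>F. \<bar>f y - f x\<bar> < e} \<subseteq> U"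
proof -
  have "generate_topology_on {f -` U | f U. f \<in> dual_space T \<and> open U} U"
    using assms(1) unfolding weak_topology_def openin_topology_generated_by_iff .
  thus ?thesis using assms(2)
  proof (induction arbitrary: x)
    case Empty thus ?case by simp
  next
    case (Int a b x)
    then obtain F1 e1 F2 e2 where 1: "finite F1" "F1 \<subseteq> dual_space T" "e1 > 0" "{y. \<forall>f\<in>F1. \<bar>f y - f x\<bar> < e1} \<subseteq> a"
      and 2: "finite F2" "F2 \<subseteq> dual_space T" "e2 > 0" "{y. \<forall>f\<in>F2. \<bar>f y - f x\<bar> < e2} \<subseteq> b"
      by (meson IntD1 IntD2)
    show ?case
      by (rule exI[of _ "F1 \<union> F2"], rule exI[of _ "min e1 e2"]) (use 1 2 in fastforce)
  next
    case (UN K x)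
    then obtain k where "k \<in> K" "x \<in> k" by blast
    with UN.IH[OF this] show ?case by blast
  next
    case (Basis s x)
    then obtain f V where s: "s = f -` V" "f \<in> dual_space T" "open V" by blast
    then obtain e where e: "e > 0" "ball (f x) e \<subseteq> V" using Basis open_contains_ball by blast
    have "{y. \<forall>g\<in>{f}. \<bar>g y - g x\<bar> < e} \<subseteq> s"
    proof
      fix y assume "y \<in> {y. \<forall>g\<in>{f}. \<bar>g y - g x\<bar> < e}"
      hence "f y \<in> ball (f x) e" by (simp add: dist_real_def abs_minus_commute)
      thus "y \<in> s" using s e by auto
    qed
    thus ?case using s e by (intro exI[of _ "{f}"] exI[of _ e]) auto
  qed
qed

lemma weak_t1:
  assumes lc: "locally_convex_topology T"
  shows "t1_space (weak_topology T)"
  unfolding t1_space_def weak_topspace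
proof (intro ballI impI)
  fix x y :: 'a assume "x \<noteq> y"
  then obtain f where f: "f \<in> dual_space T" "f (x - y) \<noteq> 0" using sep[OF lc, of "x - y"] by auto
  hence "f x \<noteq> f y" using dual_linear[OF f(1)] by (simp add: linear_diff)
  moreover have "openin (weak_topology T) (f -` (- {f y}))"
    by (rule weak_basis[OF f(1)]) (simp add: open_Compl)
  ultimately show "\<exists>U. openin (weak_topology T) U \<and> x \<in> U \<and> y \<notin> U" by blast
qed

lemma sigma_pseudo:
  assumes sig: "sigma_space X" and t1: "t1_space X"
  shows "countable_pseudocharacter X"
  unfolding countable_pseudocharacter_def
proof
  fix x assume x: "x \<in> topspace X"
  obtain N where net: "network_in X N" and sl: "sigma_locally_finite_in X N" and reg: "regular_space X"
    using sig unfolding sigma_space_def by blast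
  obtain F :: "nat \<Rightarrow> _" where NF: "N = (\<Union>n. F n)" and lf: "\<And>n. locally_finite_in X (F n)"
    using sl unfolding sigma_locally_finite_in_def by blast
  define G where "G n = {S \<in> F n. x \<notin> X closure_of S}" for n
  define U where "U n = topspace X - \<Union>((\<lambda>S. X closure_of S) ` G n)" for n
  have oU: "openin X (U n)" for n
  proof -
    have "locally_finite_in X (G n)" using lf[of n] by (rule locally_finite_in_subset) (unfold G_def, blast)
    hence "closedin X (\<Union>((\<lambda>S. X closure_of S) ` G n))" by (rule closedin_Union_locally_finite_closure)
    thus ?thesis unfolding U_def by (rule openin_diff[OF openin_topspace])
  qed
  have xU: "x \<in> U n" for n using x unfolding U_def G_def by auto
  define \<U> where "\<U> = insert (topspace X) (range U)"
  have "countable \<U>" unfolding \<U>_def by simp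
  moreover have "\<forall>V\<in>\<U>. openin X V \<and> x \<in> V" unfolding \<U>_def using oU xU x by auto
  moreover have "\<Inter>\<U> = {x}"
  proof
    show "{x} \<subseteq> \<Inter>\<U>" using xU x unfolding \<U>_def by auto
    show "\<Inter>\<U> \<subseteq> {x}"
    proof
      fix y assume y: "y \<in> \<Inter>\<U>"
      hence yt: "y \<in> topspace X" unfolding \<U>_def by simp
      show "y \<in> {x}"
      proof (rule ccontr)
        assume "y \<notin> {x}"
        have "closedin X {x}" using t1 x by (simp add: t1_space_closedin_singleton)
        moreover have "y \<in> topspace X - {x}" using yt \<open>y \<notin> {x}\<close> by blast
        ultimately have "\<exists>V1 V2. openin X V1 \<and> openin X V2 \<and> y \<in> V1 \<and> {x} \<subseteq> V2 \<and> disjnt V1 V2"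
          using reg unfolding regular_space_def by blast
        then obtain V1 V2 where V: "openin X V1" "openin X V2" "y \<in> V1" "{x} \<subseteq> V2" "disjnt V1 V2"
          by blast
        obtain S where S: "S \<in> N" "y \<in> S" "S \<subseteq> V1" using net V unfolding network_in_def by blast
        then obtain n where Sn: "S \<in> F n" using NF by blast
        have SV: "S \<inter> V2 = {}" using S(3) V(5) unfolding disjnt_def by blast
        have "x \<notin> X closure_of S"
          unfolding in_closure_of using V(2,4) SV by blast
        hence "S \<in> G n" using Sn unfolding G_def by blast
        moreover have "y \<in> X closure_of S"
          using closure_of_subset[OF subset_trans[OF S(3) openin_subset[OF V(1)]]] S(2) by blast
        ultimately have "y \<notin> U n" unfolding U_def by blast
        moreover have "y \<in> U n" using y unfolding \<U>_def by blast
        ultimately show False by blast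
      qed
    qed
  qed
  ultimately show "\<exists>\<U>. countable \<U> \<and> (\<forall>U\<in>\<U>. openin X U \<and> x \<in> U) \<and> \<Inter> \<U> = {x}" by blast
qed

lemma get_seq:
  assumes lc: "locally_convex_topology T" and nt: "(UNIV :: 'a set) \<noteq> {0}"
    and cp: "countable_pseudocharacter (weak_topology T)"
  shows "\<exists>g :: nat \<Rightarrow> 'a::real_vector \<Rightarrow> real. (\<forall>n. g n \<in> dual_space T) \<and> (\<forall>y. (\<forall>n. g n y = 0) \<longrightarrow> y = 0)"
proof -
  have "(0::'a) \<in> topspace (weak_topology T)" by (simp add: weak_topspace)
  from cp[unfolded countable_pseudocharacter_def, rule_format, OF this]
  obtain \<U> where U0: "countable \<U>" "\<forall>U\<in>\<U>. openin (weak_topology T) U \<and> (0::'a) \<in> U" "\<Inter>\<U> = {0}"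
    by (elim exE conjE) 
  have U: "countable \<U>" "\<And>U. U\<in>\<U> \<Longrightarrow> openin (weak_topology T) U \<and> (0::'a) \<in> U" "\<Inter>\<U> = {0}"
    using U0 by auto
  have "\<forall>U\<in>\<U>. \<exists>F. finite F \<and> F \<subseteq> dual_space T \<and> (\<exists>e>0. {y. \<forall>f\<in>F. \<bar>f y - f 0\<bar> < e} \<subseteq> U)"
  proof
    fix U assume "U \<in> \<U>"
    from weak_nbhd[OF conjunct1[OF U(2)[OF this]] conjunct2[OF U(2)[OF this]]]
    show "\<exists>F. finite F \<and> F \<subseteq> dual_space T \<and> (\<exists>e>0. {y. \<forall>f\<in>F. \<bar>f y - f 0\<bar> < e} \<subseteq> U)"
      by blast
  qed
  hence "\<exists>FF. \<forall>U\<in>\<U>. finite (FF U) \<and> FF U \<subseteq> dual_space T \<and> (\<exists>e>0. {y. \<forall>f\<in>FF U. \<bar>f y - f 0\<bar> < e} \<subseteq> U)"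
    by (rule bchoice)
  then obtain FF where FF: "\<forall>U\<in>\<U>. finite (FF U) \<and> FF U \<subseteq> dual_space T \<and> (\<exists>e>0. {y. \<forall>f\<in>FF U. \<bar>f y - f 0\<bar> < e} \<subseteq> U)"
    by blast
  define D where "D = (\<Union>U\<in>\<U>. FF U)"
  have cD: "countable D" unfolding D_def using U(1) FF by (intro countable_UN) (auto intro: countable_finite)
  have Dd: "D \<subseteq> dual_space T" unfolding D_def using FF by blast
  have Dsep: "y = 0" if y0: "\<forall>f\<in>D. f y = 0" for y
  proof -
    have "y \<in> U" if U: "U \<in> \<U>" for U
    proof -
      obtain e where e: "e > 0" "{y. \<forall>f\<in>FF U. \<bar>f y - f 0\<bar> < e} \<subseteq> U" using FF U by blast
      have "\<forall>f\<in>FF U. \<bar>f y - f 0\<bar> < e"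
      proof
        fix f assume f: "f \<in> FF U"
        hence "f \<in> D" using U unfolding D_def by blast
        moreover have "linear f" using f FF U dual_linear by blast
        ultimately have "f y = 0" "f 0 = 0" using y0 by (auto simp: linear_0)
        thus "\<bar>f y - f 0\<bar> < e" using e by simp
      qed
      thus ?thesis using e by blast
    qed
    hence "y \<in> \<Inter>\<U>" by blast
    thus ?thesis using U(3) by simp
  qed
  have "D \<noteq> {}"
  proof
    assume "D = {}"
    hence "\<forall>y::'a. y = 0" using Dsep by blast
    thus False using nt by blast
  qed
  define g where "g = from_nat_into D"
  have "range g = D" unfolding g_def using \<open>D \<noteq> {}\<close> cD by simp
  hence "\<forall>n. g n \<in> dual_space T" "\<forall>y. (\<forall>n. g n y = 0) \<longrightarrow> y = 0" using Dd Dsep by auto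
  thus ?thesis by blast
qed



lemma prod_box:
  assumes "openin (powertop_real (UNIV::'i set)) Q0" "w \<in> Q0"
  shows "\<exists>X e. finite X \<and> e > 0 \<and> (\<forall>z. (\<forall>i\<in>X. \<bar>z i - w i\<bar> < e) \<longrightarrow> z \<in> Q0)"
proof -
  obtain U where U: "finite {i. U i \<noteq> UNIV}" "\<And>i. open (U i)" "w \<in> Pi\<^sub>E UNIV U" "Pi\<^sub>E UNIV U \<subseteq> Q0"
    using assms unfolding openin_product_topology_alt by auto
  define X where "X = {i. U i \<noteq> UNIV}"
  have "\<forall>i\<in>X. \<exists>e>0. ball (w i) e \<subseteq> U i"
  proof
    fix i
    have "w i \<in> U i" using U(3) by (simp add: PiE_iff)
    thus "\<exists>e>0. ball (w i) e \<subseteq> U i" using U(2) open_contains_ball by blast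
  qed
  then obtain E where E: "\<forall>i\<in>X. E i > 0 \<and> ball (w i) (E i) \<subseteq> U i" by metis
  define e where "e = Min (insert 1 (E ` X))"
  have fX: "finite X" using U(1) X_def by simp
  have e0: "e > 0" unfolding e_def using fX E by (subst Min_gr_iff) auto
  have eE: "e \<le> E i" if "i \<in> X" for i unfolding e_def using fX that by (intro Min_le) auto
  have "z \<in> Q0" if z: "\<forall>i\<in>X. \<bar>z i - w i\<bar> < e" for z
  proof -
    have "z i \<in> U i" for i
    proof (cases "i \<in> X")
      case True
      have "\<bar>z i - w i\<bar> < e" using z True by blast
      hence "dist (w i) (z i) < E i" using eE[OF True] by (simp add: dist_real_def abs_minus_commute)
      hence "z i \<in> ball (w i) (E i)" by simp
      thus ?thesis using E True by blast
    next
      case False thus ?thesis unfolding X_def by simp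
    qed
    hence "z \<in> Pi\<^sub>E UNIV U" by (simp add: PiE_UNIV_domain)
    thus ?thesis using U(4) by blast
  qed
  thus ?thesis using fX e0 by blast
qed

lemma second_countable_euclidean_class:
  "second_countable (euclidean :: ('a::second_countable_topology) topology)"
proof -
  obtain B :: "'a set set" where B: "countable B" "\<And>C. C \<in> B \<Longrightarrow> open C"
    "\<And>S. open S \<Longrightarrow> \<exists>U. U \<subseteq> B \<and> S = \<Union>U"
    using univ_second_countable by blast
  show ?thesis unfolding second_countable_def
  proof (intro exI[of _ B] conjI allI impI)
    show "countable B" by fact
    show "\<forall>V\<in>B. openin euclidean V" using B by simp
    fix U :: "'a set" and x assume "openin euclidean U \<and> x \<in> U"
    then obtain W where "W \<subseteq> B" "U = \<Union>W" "x \<in> U" using B(3) by auto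
    thus "\<exists>V\<in>B. x \<in> V \<and> V \<subseteq> U" by blast
  qed
qed

lemma tau_part:
  fixes T :: "'a::real_vector topology" and g :: "nat \<Rightarrow> 'a \<Rightarrow> real"
  assumes lc: "locally_convex_topology T" and gd: "\<And>n. g n \<in> dual_space T"
    and gs: "\<And>y. (\<forall>n. g n y = 0) \<Longrightarrow> y = 0"
  shows "\<exists>\<tau>. locally_convex_topology \<tau> \<and> metrizable_space \<tau> \<and> separable_space \<tau> \<and>
            (\<forall>U. openin \<tau> U \<longrightarrow> openin (weak_topology T) U)"
proof -
  define \<phi> where "\<phi> y = (\<lambda>n. g n y)" for y
  define \<tau> where "\<tau> = pullback_topology UNIV \<phi> (powertop_real UNIV)"
  have gl: "linear (g n)" for n using dual_linear gd by blast
  have tsp: "topspace \<tau> = UNIV" unfolding \<tau>_def topspace_pullback_topology by simp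
  have gc: "continuous_map \<tau> euclideanreal (g n)" for n
  proof -
    have "continuous_map \<tau> euclideanreal ((\<lambda>v. v n) \<circ> \<phi>)" unfolding \<tau>_def
      by (rule continuous_map_pullback) (rule continuous_map_product_projection, simp)
    thus ?thesis by (simp add: \<phi>_def o_def)
  qed
  have into: "continuous_map X \<tau> h" if h: "\<And>n. continuous_map X euclideanreal (\<lambda>z. g n (h z))" for X :: "'b topology" and h
    unfolding \<tau>_def
  proof (rule continuous_map_pullback')
    show "continuous_map X (powertop_real UNIV) (\<phi> \<circ> h)"
      unfolding continuous_map_componentwise_UNIV using h by (simp add: \<phi>_def o_def)
  qed simp
  have inj: "inj \<phi>"
  proof (rule injI)
    fix x y assume "\<phi> x = \<phi> y"
    hence "\<forall>n. g n (x - y) = 0" unfolding \<phi>_def by (auto simp: fun_eq_iff linear_diff[OF gl])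
    thus "x = y" using gs by fastforce
  qed
  have box: "\<exists>I e. finite I \<and> e > 0 \<and> {y. \<forall>i\<in>I. \<bar>g i y - g i x\<bar> < e} \<subseteq> U"
    if U: "openin \<tau> U" "x \<in> U" for U x
  proof -
    obtain V where V: "openin (powertop_real UNIV) V" "U = \<phi> -` V \<inter> UNIV"
      using U(1) unfolding \<tau>_def openin_pullback_topology by blast
    obtain I e where Ie: "finite I" "e > 0" "\<forall>z. (\<forall>i\<in>I. \<bar>z i - \<phi> x i\<bar> < e) \<longrightarrow> z \<in> V"
      using prod_box[OF V(1)] U(2) V(2) by blast
    have "{y. \<forall>i\<in>I. \<bar>g i y - g i x\<bar> < e} \<subseteq> U" using Ie V(2) by (auto simp: \<phi>_def)
    thus ?thesis using Ie by blast
  qed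
  have lct: "locally_convex_topology \<tau>"
    unfolding locally_convex_topology_def
  proof (intro conjI allI impI)
    show "topspace \<tau> = UNIV" by (rule tsp)
    show "continuous_map (prod_topology \<tau> \<tau>) \<tau> (\<lambda>(x, y). x + y)"
    proof (rule into)
      fix n
      have "continuous_map (prod_topology \<tau> \<tau>) euclideanreal (\<lambda>z. g n (fst z) + g n (snd z))"
        by (intro continuous_map_add continuous_map_compose[OF continuous_map_fst gc, unfolded o_def]
            continuous_map_compose[OF continuous_map_snd gc, unfolded o_def])
      moreover have "(\<lambda>z. g n (fst z) + g n (snd z)) = (\<lambda>z. g n (case z of (x, y) \<Rightarrow> x + y))"
        by (auto simp: fun_eq_iff linear_add[OF gl])
      ultimately show "continuous_map (prod_topology \<tau> \<tau>) euclideanreal (\<lambda>z. g n (case z of (x, y) \<Rightarrow> x + y))"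
        by simp
    qed
    show "continuous_map (prod_topology euclideanreal \<tau>) \<tau> (\<lambda>(c, x). c *\<^sub>R x)"
    proof (rule into)
      fix n
      have "continuous_map (prod_topology euclideanreal \<tau>) euclideanreal (\<lambda>z. fst z * g n (snd z))"
        by (intro continuous_map_real_mult continuous_map_fst
            continuous_map_compose[OF continuous_map_snd gc, unfolded o_def])
      moreover have "(\<lambda>z. fst z * g n (snd z)) = (\<lambda>z. g n (case z of (c, x) \<Rightarrow> c *\<^sub>R x))"
        by (auto simp: fun_eq_iff linear_scale[OF gl])
      ultimately show "continuous_map (prod_topology euclideanreal \<tau>) euclideanreal (\<lambda>z. g n (case z of (c, x) \<Rightarrow> c *\<^sub>R x))"
        by simp
    qed
    show "Hausdorff_space \<tau>"
      unfolding Hausdorff_space_def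
    proof (intro allI impI)
      fix x y assume "x \<in> topspace \<tau> \<and> y \<in> topspace \<tau> \<and> x \<noteq> y"
      hence "\<phi> x \<noteq> \<phi> y" using inj by (auto dest: injD)
      then obtain n where n: "g n x \<noteq> g n y" unfolding \<phi>_def by (auto simp: fun_eq_iff)
      define d where "d = \<bar>g n x - g n y\<bar> / 2"
      have d: "d > 0" using n unfolding d_def by simp
      have o1: "openin \<tau> {z \<in> topspace \<tau>. g n z \<in> ball (g n x) d}"
        by (rule openin_continuous_map_preimage[OF gc]) simp
      have o2: "openin \<tau> {z \<in> topspace \<tau>. g n z \<in> ball (g n y) d}"
        by (rule openin_continuous_map_preimage[OF gc]) simp
      have dj: "disjnt {z \<in> topspace \<tau>. g n z \<in> ball (g n x) d} {z \<in> topspace \<tau>. g n z \<in> ball (g n y) d}"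
        unfolding disjnt_def d_def by (auto simp: dist_real_def abs_if split: if_splits)
      show "\<exists>U V. openin \<tau> U \<and> openin \<tau> V \<and> x \<in> U \<and> y \<in> V \<and> disjnt U V"
        using o1 o2 dj d tsp by (intro exI conjI) auto
    qed
    fix U x assume Ux: "openin \<tau> U \<and> x \<in> U"
    then obtain I e where Ie: "finite I" "e > 0" "{y. \<forall>i\<in>I. \<bar>g i y - g i x\<bar> < e} \<subseteq> U"
      using box by blast
    define B where "B = {y. \<forall>i\<in>I. \<bar>g i y - g i x\<bar> < e}"
    have "openin \<tau> B"
      using open_box_gen[of I \<tau> g "\<lambda>i. g i x" e] Ie gc unfolding B_def tsp by simp
    moreover have "convex B"
    proof (rule convexI)
      fix u v a b assume h: "u \<in> B" "v \<in> B" "0 \<le> (a::real)" "0 \<le> b" "a + b = 1"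
      show "a *\<^sub>R u + b *\<^sub>R v \<in> B" unfolding B_def
      proof (intro CollectI ballI)
        fix i assume i: "i \<in> I"
        have "g i (a *\<^sub>R u + b *\<^sub>R v) - g i x = a * (g i u - g i x) + b * (g i v - g i x)"
          using h(5) by (simp add: linear_add[OF gl] linear_scale[OF gl] algebra_simps)
           (metis add_diff_cancel_right' distrib_right mult_1 mult.commute)
        hence "\<bar>g i (a *\<^sub>R u + b *\<^sub>R v) - g i x\<bar> \<le> a * \<bar>g i u - g i x\<bar> + b * \<bar>g i v - g i x\<bar>"
          using h(3,4) by (simp add: abs_mult) (metis abs_of_nonneg abs_mult abs_triangle_ineq)
        also have "\<dots> < e" using h i unfolding B_def by (intro convex_bound_lt) auto
        finally show "\<bar>g i (a *\<^sub>R u + b *\<^sub>R v) - g i x\<bar> < e" .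
      qed
    qed
    moreover have "x \<in> B" using Ie unfolding B_def by simp
    ultimately show "\<exists>V. openin \<tau> V \<and> convex V \<and> x \<in> V \<and> V \<subseteq> U" using Ie B_def by blast
  qed
  have weak: "openin (weak_topology T) U" if U: "openin \<tau> U" for U
  proof (subst openin_subopen, intro ballI)
    fix x assume "x \<in> U"
    then obtain I e where Ie: "finite I" "e > 0" "{y. \<forall>i\<in>I. \<bar>g i y - g i x\<bar> < e} \<subseteq> U"
      using box U by blast
    have "openin (weak_topology T) {y. \<forall>i\<in>I. \<bar>g i y - g i x\<bar> < e}"
      using open_box_gen[of I "weak_topology T" g "\<lambda>i. g i x" e] Ie dual_cont_weak[OF gd]
      unfolding weak_topspace by simp
    thus "\<exists>T'. openin (weak_topology T) T' \<and> x \<in> T' \<and> T' \<subseteq> U" using Ie by (intro exI conjI) auto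
  qed
  define P :: "(nat \<Rightarrow> real) topology" where "P = powertop_real UNIV"
  have PE: "P = euclidean" unfolding P_def by (rule euclidean_product_topology)
  have hm: "homeomorphic_map \<tau> (subtopology P (range \<phi>)) \<phi>"
  proof (rule bijective_open_imp_homeomorphic_map)
    have "continuous_map \<tau> P (id \<circ> \<phi>)" unfolding \<tau>_def P_def by (rule continuous_map_pullback) simp
    thus "continuous_map \<tau> (subtopology P (range \<phi>)) \<phi>"
      by (simp add: continuous_map_in_subtopology)
    show "open_map \<tau> (subtopology P (range \<phi>)) \<phi>"
      unfolding open_map_def
    proof (intro allI impI)
      fix U assume "openin \<tau> U"
      then obtain V where V: "openin P V" "U = \<phi> -` V \<inter> UNIV"
        unfolding \<tau>_def P_def openin_pullback_topology by blast
      have "\<phi> ` U = V \<inter> range \<phi>" using V(2) by auto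
      thus "openin (subtopology P (range \<phi>)) (\<phi> ` U)" using V(1) openin_subtopology by blast
    qed
    show "\<phi> ` topspace \<tau> = topspace (subtopology P (range \<phi>))" by (simp add: tsp P_def)
    show "inj_on \<phi> (topspace \<tau>)" using inj by (simp add: tsp)
  qed
  hence hs: "\<tau> homeomorphic_space (subtopology P (range \<phi>))"
    by (rule homeomorphic_map_imp_homeomorphic_space)
  have "metrizable_space (subtopology P (range \<phi>))"
    unfolding PE by (intro metrizable_space_subtopology metrizable_space_euclidean)
  hence "metrizable_space \<tau>" using homeomorphic_metrizable_space[OF hs] by simp
  moreover have "separable_space (subtopology P (range \<phi>))"
    unfolding PE by (intro second_countable_imp_separable_space second_countable_subtopology
        second_countable_euclidean_class)
  hence "separable_space \<tau>" using homeomorphic_separable_space[OF hs] by simp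
  ultimately show ?thesis using lct weak by blast
qed



lemma card_part:
  fixes g :: "nat \<Rightarrow> 'a::real_vector \<Rightarrow> real"
  assumes gl: "\<And>n. linear (g n)" and gs: "\<And>y. (\<forall>n. g n y = 0) \<Longrightarrow> y = 0"
    and nt: "(UNIV :: 'a set) \<noteq> {0}"
  shows "(UNIV :: 'a set) \<approx> (UNIV :: real set)"
proof -
  define \<phi> where "\<phi> y = (\<lambda>n. g n y)" for y
  have inj: "inj \<phi>"
  proof (rule injI)
    fix x y assume "\<phi> x = \<phi> y"
    hence "\<forall>n. g n (x - y) = 0" unfolding \<phi>_def by (auto simp: fun_eq_iff linear_diff[OF gl])
    thus "x = y" using gs by fastforce
  qed
  have 1: "(UNIV::'a set) \<lesssim> (UNIV :: (nat \<Rightarrow> real) set)"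
    unfolding lepoll_def using inj by blast
  obtain h where h: "bij_betw h (UNIV::real set) (UNIV::nat set set)"
    using eqpoll_sym[OF nat_sets_eqpoll_reals] unfolding eqpoll_def by blast
  have ih: "inj h" using h by (simp add: bij_betw_def)
  define F where "F u = {prod_encode (n,k) | n k. k \<in> h (u n)}" for u :: "nat \<Rightarrow> real"
  have Fmem: "prod_encode (n,k) \<in> F u \<longleftrightarrow> k \<in> h (u n)" for n k u
    unfolding F_def by (auto simp: prod_encode_eq)
  have "inj F"
  proof (rule injI)
    fix u v assume "F u = F v"
    hence "h (u n) = h (v n)" for n using Fmem by blast
    hence "u n = v n" for n using injD[OF ih] by blast
    thus "u = v" by auto
  qed
  hence 2: "(UNIV :: (nat \<Rightarrow> real) set) \<lesssim> (UNIV :: nat set set)"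
    unfolding lepoll_def by blast
  have 3: "(UNIV :: nat set set) \<lesssim> (UNIV :: real set)"
    by (rule eqpoll_imp_lepoll[OF nat_sets_eqpoll_reals])
  obtain v :: 'a where v: "v \<noteq> 0" using nt by blast
  have "inj (\<lambda>t::real. t *\<^sub>R v)" using v by (auto intro: injI)
  hence 4: "(UNIV :: real set) \<lesssim> (UNIV :: 'a set)" unfolding lepoll_def by blast
  show ?thesis
    by (rule lepoll_antisym[OF lepoll_trans[OF 1 lepoll_trans[OF 2 3]] 4])
qed



definition Gspan :: "(nat \<Rightarrow> 'a \<Rightarrow> real) \<Rightarrow> ('a \<Rightarrow> real) set" where
  "Gspan g = {h. \<exists>n c. h = (\<lambda>y. \<Sum>i<n. c i * g i y)}"

lemma pad_sum:
  fixes n N :: nat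
  assumes "n \<le> N"
  shows "(\<Sum>i<N. (if i < n then c i else 0) * a i) = (\<Sum>i<n. c i * (a i :: real))"
proof -
  have "(\<Sum>i<N. (if i < n then c i else 0) * a i) = (\<Sum>i\<in>{..<N}. if i \<in> {..<n} then c i * a i else 0)"
    by (intro sum.cong) auto
  also have "\<dots> = (\<Sum>i\<in>{..<N} \<inter> {..<n}. c i * a i)" by (rule sum.inter_restrict[symmetric]) simp
  also have "{..<N} \<inter> {..<n} = {..<n}" using assms by auto
  finally show ?thesis .
qed

lemma G_add: "h1 \<in> Gspan g \<Longrightarrow> h2 \<in> Gspan g \<Longrightarrow> (\<lambda>y. h1 y + h2 y) \<in> Gspan g"
proof -
  assume "h1 \<in> Gspan g" "h2 \<in> Gspan g"
  then obtain n c m d where h: "h1 = (\<lambda>y. \<Sum>i<n. c i * g i y)" "h2 = (\<lambda>y. \<Sum>i<m. d i * g i y)"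
    unfolding Gspan_def by blast
  define e where "e i = (if i < n then c i else 0) + (if i < m then d i else 0)" for i
  have "(\<lambda>y. h1 y + h2 y) = (\<lambda>y. \<Sum>i<n+m. e i * g i y)"
  proof
    fix y
    have "(\<Sum>i<n+m. e i * g i y) = (\<Sum>i<n+m. (if i < n then c i else 0) * g i y) + (\<Sum>i<n+m. (if i < m then d i else 0) * g i y)"
      unfolding e_def by (simp add: distrib_right sum.distrib)
    also have "\<dots> = h1 y + h2 y" unfolding h by (simp add: pad_sum)
    finally show "h1 y + h2 y = (\<Sum>i<n+m. e i * g i y)" by simp
  qed
  thus ?thesis unfolding Gspan_def by blast
qed

lemma G_scale: "h \<in> Gspan g \<Longrightarrow> (\<lambda>y. a * h y) \<in> Gspan g"
proof -
  assume "h \<in> Gspan g"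
  then obtain n c where h: "h = (\<lambda>y. \<Sum>i<n. c i * g i y)" unfolding Gspan_def by blast
  have eq: "(\<lambda>y. a * h y) = (\<lambda>y. \<Sum>i<n. (a * c i) * g i y)" unfolding h by (simp add: sum_distrib_left mult.assoc)
  show ?thesis unfolding Gspan_def
    by (rule CollectI, rule exI[of _ n], rule exI[of _ "\<lambda>i. a * c i"]) (rule eq)
qed

lemma G_g: "g k \<in> Gspan g"
proof -
  have eq: "g k = (\<lambda>y. \<Sum>i<Suc k. (if i = k then 1 else 0) * g i y)"
    by (simp add: if_distrib sum.delta cong: if_cong)
  show ?thesis unfolding Gspan_def
    by (rule CollectI, rule exI[of _ "Suc k"], rule exI[of _ "\<lambda>i. if i = k then 1 else 0"]) (rule eq)
qed

lemma G_zero: "(\<lambda>_. 0) \<in> Gspan g"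
  unfolding Gspan_def by (rule CollectI, rule exI[of _ 0]) simp

lemma sum_lin:
  fixes g :: "nat \<Rightarrow> 'a::real_vector \<Rightarrow> real"
  assumes gl: "\<And>n. linear (g n)"
  shows "linear (\<lambda>y. \<Sum>i<n. c i * g i y)"
proof (rule linearI)
  show "(\<Sum>i<n. c i * g i (b1 + b2)) = (\<Sum>i<n. c i * g i b1) + (\<Sum>i<n. c i * g i b2)" for b1 b2
    by (simp add: linear_add[OF gl] ring_distribs sum.distrib)
  show "(\<Sum>i<n. c i * g i (r *\<^sub>R b)) = r *\<^sub>R (\<Sum>i<n. c i * g i b)" for r b
    by (simp add: linear_scale[OF gl] sum_distrib_left algebra_simps)
qed

lemma G_lin: "(\<And>n. linear (g n :: 'a::real_vector \<Rightarrow> real)) \<Longrightarrow> h \<in> Gspan g \<Longrightarrow> linear h"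
  unfolding Gspan_def using sum_lin by blast

lemma L1:
  fixes g :: "nat \<Rightarrow> 'a::real_vector \<Rightarrow> real"
  assumes gl: "\<And>n. linear (g n)" and gs: "\<And>y. (\<forall>n. g n y = 0) \<Longrightarrow> y = 0"
  shows "finite X \<Longrightarrow> (\<forall>h\<in>Gspan g. (\<forall>x\<in>X. h x = 0) \<longrightarrow> h a = 0) \<Longrightarrow> a \<in> span X"
proof (induction X arbitrary: a rule: finite_induct)
  case empty
  hence "\<forall>n. g n a = 0" using G_g by blast
  hence "a = 0" by (rule gs)
  thus ?case by simp
next
  case (insert b X)
  show ?case
  proof (cases "\<forall>h\<in>Gspan g. (\<forall>x\<in>X. h x = 0) \<longrightarrow> h b = 0")
    case True
    hence "\<forall>h\<in>Gspan g. (\<forall>x\<in>X. h x = 0) \<longrightarrow> h a = 0" using insert.prems by auto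
    hence "a \<in> span X" by (rule insert.IH)
    thus ?thesis using span_mono[of X "insert b X"] by blast
  next
    case False
    then obtain hb where hb: "hb \<in> Gspan g" "\<forall>x\<in>X. hb x = 0" "hb b \<noteq> 0" by blast
    define k where "k = hb a / hb b"
    have "\<forall>h\<in>Gspan g. (\<forall>x\<in>X. h x = 0) \<longrightarrow> h (a - k *\<^sub>R b) = 0"
    proof (intro ballI impI)
      fix h assume h: "h \<in> Gspan g" "\<forall>x\<in>X. h x = 0"
      define h' where "h' = (\<lambda>y. h y + (- (h b / hb b)) * hb y)"
      have "h' \<in> Gspan g" unfolding h'_def by (intro G_add G_scale h hb)
      moreover have "\<forall>x\<in>insert b X. h' x = 0" unfolding h'_def using h hb by auto
      ultimately have "h' a = 0" using insert.prems by blast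
      hence "h a = (h b / hb b) * hb a" unfolding h'_def by simp
      moreover have "h (a - k *\<^sub>R b) = h a - k * h b" using G_lin[OF gl h(1)] by (simp add: linear_diff linear_scale)
      ultimately show "h (a - k *\<^sub>R b) = 0" unfolding k_def by simp
    qed
    hence "a - k *\<^sub>R b \<in> span X" by (rule insert.IH)
    thus ?thesis using span_breakdown_eq by blast
  qed
qed

lemma L2:
  fixes g :: "nat \<Rightarrow> 'a::real_vector \<Rightarrow> real"
  assumes gl: "\<And>n. linear (g n)" and gs: "\<And>y. (\<forall>n. g n y = 0) \<Longrightarrow> y = 0"
    and f: "linear f"
  shows "finite X \<Longrightarrow> \<exists>h\<in>Gspan g. \<forall>x\<in>X. h x = f x"
proof (induction X rule: finite_induct)
  case empty thus ?case using G_zero by blast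
next
  case (insert a X)
  then obtain h0 where h0: "h0 \<in> Gspan g" "\<forall>x\<in>X. h0 x = f x" by blast
  define f' where "f' = (\<lambda>y. f y - h0 y)"
  have lf': "linear f'" unfolding f'_def using f G_lin[OF gl h0(1)] by (rule linear_compose_sub)
  have f'0: "\<forall>x\<in>X. f' x = 0" unfolding f'_def using h0 by simp
  show ?case
  proof (cases "a \<in> span X")
    case True
    have "f' a = 0" by (rule linear_eq_0_on_span[OF lf']) (use f'0 True in auto)
    hence "\<forall>x\<in>insert a X. h0 x = f x" using h0(2) unfolding f'_def by simp
    thus ?thesis using h0(1) by (intro bexI)
  next
    case False
    have "\<not> (\<forall>h\<in>Gspan g. (\<forall>x\<in>X. h x = 0) \<longrightarrow> h a = 0)"
    proof
      assume H: "\<forall>h\<in>Gspan g. (\<forall>x\<in>X. h x = 0) \<longrightarrow> h a = 0"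
      have fX: "finite X" by fact
      have "a \<in> span X" using L1[OF gl gs fX H] .
      thus False using False by simp
    qed
    then obtain h where h: "h \<in> Gspan g" "\<forall>x\<in>X. h x = 0" "h a \<noteq> 0" by blast
    define h1 where "h1 = (\<lambda>y. h0 y + (f' a / h a) * h y)"
    have "h1 \<in> Gspan g" unfolding h1_def by (intro G_add G_scale h(1) h0(1))
    moreover have "\<forall>x\<in>insert a X. h1 x = f x"
    proof
      fix x assume "x \<in> insert a X"
      then consider "x = a" | "x \<in> X" by blast
      thus "h1 x = f x"
      proof cases
        case 1 thus ?thesis unfolding h1_def f'_def using h(3) by simp
      next
        case 2 thus ?thesis unfolding h1_def using h(2) h0(2) by simp
      qed
    qed
    ultimately show ?thesis by (intro bexI)
  qed
qed

lemma approx: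
  fixes g :: "nat \<Rightarrow> 'a \<Rightarrow> real"
  assumes X: "finite X" and e: "e > 0"
  shows "\<exists>qs::rat list. length qs = n \<and> (\<forall>x\<in>X. \<bar>(\<Sum>i<n. of_rat (qs!i) * g i x) - (\<Sum>i<n. c i * g i x)\<bar> < e)"
proof -
  define M where "M = 1 + (\<Sum>x\<in>X. \<Sum>i<n. \<bar>g i x\<bar>)"
  have M1: "M \<ge> 1" unfolding M_def by (simp add: sum_nonneg)
  define d where "d = e / M"
  have d: "d > 0" unfolding d_def using e M1 by simp
  have "\<forall>i. \<exists>q. \<bar>of_rat q - c i\<bar> < d"
  proof
    fix i
    obtain r where r: "r \<in> \<rat>" "c i - d < r" "r < c i" using Rats_dense_in_real[of "c i - d" "c i"] d by auto
    then obtain q where "r = of_rat q" by (auto elim: Rats_cases)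
    thus "\<exists>q. \<bar>of_rat q - c i\<bar> < d" using r by (intro exI[of _ q]) auto
  qed
  then obtain Q where Q: "\<And>i. \<bar>of_rat (Q i) - c i\<bar> < d" by metis
  define qs where "qs = map Q [0..<n]"
  have "\<bar>(\<Sum>i<n. of_rat (qs!i) * g i x) - (\<Sum>i<n. c i * g i x)\<bar> < e" if x: "x \<in> X" for x
  proof -
    have "(\<Sum>i<n. of_rat (qs!i) * g i x) - (\<Sum>i<n. c i * g i x) = (\<Sum>i<n. (of_rat (Q i) - c i) * g i x)"
      unfolding qs_def by (simp add: sum_subtractf[symmetric] left_diff_distrib)
    hence "\<bar>(\<Sum>i<n. of_rat (qs!i) * g i x) - (\<Sum>i<n. c i * g i x)\<bar> \<le> (\<Sum>i<n. \<bar>of_rat (Q i) - c i\<bar> * \<bar>g i x\<bar>)"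
      using sum_abs[of "\<lambda>i. (of_rat (Q i) - c i) * g i x" "{..<n}"] by (simp add: abs_mult)
    also have "\<dots> \<le> (\<Sum>i<n. d * \<bar>g i x\<bar>)"
      by (intro sum_mono mult_right_mono) (use Q in \<open>auto simp: less_imp_le\<close>)
    also have "\<dots> = d * (\<Sum>i<n. \<bar>g i x\<bar>)" by (simp add: sum_distrib_left)
    also have "\<dots> \<le> d * (M - 1)"
    proof -
      have "(\<Sum>i<n. \<bar>g i x\<bar>) \<le> (\<Sum>x\<in>X. \<Sum>i<n. \<bar>g i x\<bar>)"
        by (rule member_le_sum[OF x _ X]) (simp add: sum_nonneg)
      thus ?thesis using d unfolding M_def by simp
    qed
    also have "\<dots> < d * M" using d by simp
    also have "d * M = e" unfolding d_def using M1 by simp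
    finally show ?thesis .
  qed
  moreover have "length qs = n" unfolding qs_def by simp
  ultimately show ?thesis by blast
qed

lemma star_part:
  fixes T :: "'a::real_vector topology" and g :: "nat \<Rightarrow> 'a \<Rightarrow> real"
  assumes gd: "\<And>n. g n \<in> dual_space T" and gs: "\<And>y. (\<forall>n. g n y = 0) \<Longrightarrow> y = 0"
  shows "separable_space (weak_star_topology T)"
proof -
  have gl: "\<And>n. linear (g n)" using dual_linear gd by blast
  have gc: "\<And>n. continuous_map T euclideanreal (g n)" using gd unfolding dual_space_def by blast
  have indual: "(\<lambda>y. \<Sum>i<n. c i * g i y) \<in> dual_space T" for n c
  proof -
    have "linear (\<lambda>y. \<Sum>i<n. c i * g i y)" by (rule sum_lin[OF gl])
    moreover have "continuous_map T euclideanreal (\<lambda>y. \<Sum>i<n. c i * g i y)"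
      by (rule continuous_map_sum) (simp, rule continuous_map_real_mult_left[OF gc])
    ultimately show ?thesis unfolding dual_space_def by blast
  qed
  define Q where "Q = (\<lambda>qs::rat list. (\<lambda>y. \<Sum>i<length qs. of_rat (qs!i) * g i y)) ` UNIV"
  have tsp: "topspace (weak_star_topology T) = dual_space T"
    unfolding weak_star_topology_def by simp
  have "countable Q" unfolding Q_def by simp
  moreover have QD: "Q \<subseteq> dual_space T"
  proof
    fix q assume "q \<in> Q"
    then obtain qs where "q = (\<lambda>y. \<Sum>i<length qs. of_rat (qs!i) * g i y)" unfolding Q_def by blast
    thus "q \<in> dual_space T" using indual[where n="length qs" and c="\<lambda>i. of_rat (qs!i)"] by simp
  qed
  moreover have "weak_star_topology T closure_of Q = dual_space T"
  proof
    show "weak_star_topology T closure_of Q \<subseteq> dual_space T"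
      using closure_of_subset_topspace[of "weak_star_topology T" Q] tsp by simp
    show "dual_space T \<subseteq> weak_star_topology T closure_of Q"
    proof
      fix f assume f: "f \<in> dual_space T"
      show "f \<in> weak_star_topology T closure_of Q"
        unfolding in_closure_of tsp
      proof (intro conjI allI impI f)
        fix W assume W: "f \<in> W \<and> openin (weak_star_topology T) W"
        hence "openin (subtopology (powertop_real UNIV) (dual_space T)) W"
          unfolding weak_star_topology_def by simp
        then obtain O' where O': "openin (powertop_real UNIV) O'" "W = O' \<inter> dual_space T"
          unfolding openin_subtopology by (elim exE conjE)
        have fO: "f \<in> O'" using conjunct1[OF W] O'(2) by simp
        obtain X e where Xe: "finite X" "e > 0" "\<forall>z. (\<forall>x\<in>X. \<bar>z x - f x\<bar> < e) \<longrightarrow> z \<in> O'"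
          using prod_box[OF O'(1) fO] by blast
        obtain h where h: "h \<in> Gspan g" "\<forall>x\<in>X. h x = f x"
          using L2[where g=g, OF gl gs dual_linear[OF f] Xe(1)] by blast
        then obtain n c where hc: "h = (\<lambda>y. \<Sum>i<n. c i * g i y)" unfolding Gspan_def by blast
        obtain qs where qs: "length qs = n"
          "\<forall>x\<in>X. \<bar>(\<Sum>i<n. of_rat (qs!i) * g i x) - (\<Sum>i<n. c i * g i x)\<bar> < e"
          using approx[OF Xe(1,2), where n=n and c=c and g=g] by blast
        define q where "q = (\<lambda>y. \<Sum>i<length qs. of_rat (qs!i) * g i y)"
        have qQ: "q \<in> Q" unfolding Q_def q_def by (rule image_eqI[where x=qs]) simp_all
        have "\<forall>x\<in>X. \<bar>q x - f x\<bar> < e"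
        proof
          fix x assume x: "x \<in> X"
          have fx: "f x = (\<Sum>i<n. c i * g i x)" using h(2) x hc by simp
          have qx: "q x = (\<Sum>i<n. of_rat (qs!i) * g i x)" unfolding q_def qs(1) ..
          have "\<bar>(\<Sum>i<n. of_rat (qs!i) * g i x) - (\<Sum>i<n. c i * g i x)\<bar> < e" using qs(2) x by blast
          thus "\<bar>q x - f x\<bar> < e" unfolding fx qx .
        qed
        hence "q \<in> O'" using Xe(3) by blast
        moreover have "q \<in> dual_space T" using QD qQ by (rule subsetD)
        ultimately have "q \<in> W" unfolding O'(2) by (rule IntI)
        thus "\<exists>y. y \<in> Q \<and> y \<in> W" using qQ by (intro exI conjI)
      qed
    qed
  qed
  ultimately show ?thesis unfolding separable_space_def tsp by (intro exI[of _ Q] conjI)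
qed


theorem proposition3p4:
  fixes T :: "('a::real_vector) topology"
  assumes "locally_convex_topology T"
    and "(UNIV :: 'a set) \<noteq> {0}"
    and "sigma_space (weak_topology T)"
  shows "(\<exists>\<tau>. locally_convex_topology \<tau> \<and> metrizable_space \<tau> \<and> separable_space \<tau> \<and>
            (\<forall>U. openin \<tau> U \<longrightarrow> openin (weak_topology T) U))
       \<and> countable_pseudocharacter (weak_topology T)
       \<and> (UNIV :: 'a set) \<approx> (UNIV :: real set)
       \<and> separable_space (weak_star_topology T)"
proof -
  have t1: "t1_space (weak_topology T)" by (rule weak_t1[OF assms(1)])
  have cp: "countable_pseudocharacter (weak_topology T)" by (rule sigma_pseudo[OF assms(3) t1])
  obtain g :: "nat \<Rightarrow> 'a \<Rightarrow> real" where g: "(\<forall>n. g n \<in> dual_space T) \<and> (\<forall>y. (\<forall>n. g n y = 0) \<longrightarrow> y = 0)"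
    using get_seq[OF assms(1) assms(2) cp] by (elim exE)
  have gd: "\<And>n. g n \<in> dual_space T" using g by blast
  have gs: "\<And>y. (\<forall>n. g n y = 0) \<Longrightarrow> y = 0" using g by blast
  have gl: "\<And>n. linear (g n)" using gd dual_linear by blast
  have 1: "\<exists>\<tau>. locally_convex_topology \<tau> \<and> metrizable_space \<tau> \<and> separable_space \<tau> \<and>
            (\<forall>U. openin \<tau> U \<longrightarrow> openin (weak_topology T) U)"
    by (rule tau_part[where g=g, OF assms(1) gd gs])
  have 3: "(UNIV :: 'a set) \<approx> (UNIV :: real set)" by (rule card_part[where g=g, OF gl gs assms(2)])
  have 4: "separable_space (weak_star_topology T)" by (rule star_part[where g=g, OF gd gs])
  show ?thesis using 1 cp 3 4 by (intro conjI)
qed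

end
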